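(* Let $G$ be a graph on $n\ge 3$ vertices, with an edge-colouring using exactly $r$ colours. Let $f:\binom{V(G)}{2}\to\mathbb{Z}_{\ge 0}$ be such that for all distinct $u,v\in V(G)$, there are $f(u,v)$ disjoint monochromatic super-paths connecting $u$ and $v$. Then \[ e(G)\ge\left\lceil\frac{w(f)}{n-2}\right\rceil+r-1. \]
   Context: All graphs are finite, simple and undirected. A super-path is a path of length at least two. Paths are called disjoint if they are internally vertex-disjoint. An edge-coloured path is monochromatic if all its edges have the same colour. For $f:\binom{V(G)}{2}\to\mathbb{Z}_{\ge 0}$ write $f(u,v)=f(\{u,v\})$, and define the weight $w(f)=\sum_{\{u,v\}\in\binom{V(G)}{2}} f(u,v)$. *)

theory Defs
  imports Complex_Main
begin

definition simple_graph :: "'a set \<Rightarrow> 'a set set \<Rightarrow> bool" where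
  "simple_graph V E \<longleftrightarrow> finite V \<and> (\<forall>e\<in>E. e \<subseteq> V \<and> card e = 2)"

definition is_path :: "'a set set \<Rightarrow> 'a list \<Rightarrow> bool" where
  "is_path E p \<longleftrightarrow> p \<noteq> [] \<and> distinct p \<and> (\<forall>i. Suc i < length p \<longrightarrow> {p ! i, p ! Suc i} \<in> E)"

definition path_edges :: "'a list \<Rightarrow> 'a set set" where
  "path_edges p = {{p ! i, p ! Suc i} | i. Suc i < length p}"

definition mono_super_path ::
  "'a set set \<Rightarrow> ('a set \<Rightarrow> 'c) \<Rightarrow> 'a \<Rightarrow> 'a \<Rightarrow> 'a list \<Rightarrow> bool" where
  "mono_super_path E col u v p \<longleftrightarrow>
     is_path E p \<and> length p \<ge> 3 \<and> hd p = u \<and> last p = v \<and>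
     (\<exists>c. \<forall>e\<in>path_edges p. col e = c)"

definition path_interior :: "'a list \<Rightarrow> 'a set" where
  "path_interior p = set (butlast (tl p))"

definition has_disjoint_mono_super_paths ::
  "'a set set \<Rightarrow> ('a set \<Rightarrow> 'c) \<Rightarrow> 'a \<Rightarrow> 'a \<Rightarrow> nat \<Rightarrow> bool" where
  "has_disjoint_mono_super_paths E col u v k \<longleftrightarrow>
     (\<exists>P :: nat \<Rightarrow> 'a list.
        (\<forall>i<k. mono_super_path E col u v (P i)) \<and>
        (\<forall>i<k. \<forall>j<k. i \<noteq> j \<longrightarrow> path_interior (P i) \<inter> path_interior (P j) = {}))"

definition weight :: "'a set \<Rightarrow> ('a set \<Rightarrow> nat) \<Rightarrow> nat" where
  "weight V f = (\<Sum>e\<in>{e. e \<subseteq> V \<and> card e = 2}. f e)"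

end

theory Submission
  imports Defs
begin


lemma msp_basic:
  assumes "mono_super_path E col u v P"
  shows "length P \<ge> 3" "P ! 0 = u" "P ! (length P - 1) = v" "distinct P"
    "\<And>i. Suc i < length P \<Longrightarrow> {P ! i, P ! Suc i} \<in> E"
    "\<And>i. Suc i < length P \<Longrightarrow> col {P ! i, P ! Suc i} = col {P ! 0, P ! 1}"
proof -
  have ip: "is_path E P" and l3: "length P \<ge> 3" and h: "hd P = u" and la: "last P = v"
    and ex: "\<exists>c. \<forall>e\<in>path_edges P. col e = c"
    using assms unfolding mono_super_path_def by auto
  have ne: "P \<noteq> []" using l3 by auto
  show "length P \<ge> 3" by (rule l3)
  show "P ! 0 = u" using h ne by (simp add: hd_conv_nth)
  show "P ! (length P - 1) = v" using la ne by (simp add: last_conv_nth)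
  show "distinct P" using ip unfolding is_path_def by auto
  show "\<And>i. Suc i < length P \<Longrightarrow> {P ! i, P ! Suc i} \<in> E" using ip unfolding is_path_def by auto
  obtain c where c: "\<forall>e\<in>path_edges P. col e = c" using ex by auto
  have pe: "\<And>i. Suc i < length P \<Longrightarrow> col {P ! i, P ! Suc i} = c"
    using c unfolding path_edges_def by blast
  show "\<And>i. Suc i < length P \<Longrightarrow> col {P ! i, P ! Suc i} = col {P ! 0, P ! 1}"
    using pe[of 0] pe l3 by (metis One_nat_def Suc_le_lessD le_trans numeral_3_eq_3 le_add1 plus_1_eq_Suc Suc_le_mono)
qed

lemma interior_iff:
  "x \<in> path_interior P \<longleftrightarrow> (\<exists>i. 0 < i \<and> i < length P - 1 \<and> P ! i = x)"
proof -
  have "x \<in> path_interior P \<longleftrightarrow> (\<exists>j < length P - 2. butlast (tl P) ! j = x)"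
    unfolding path_interior_def by (simp add: in_set_conv_nth numeral_2_eq_2)
  also have "\<dots> \<longleftrightarrow> (\<exists>j < length P - 2. P ! Suc j = x)"
    by (auto simp: nth_butlast nth_tl)
  also have "\<dots> \<longleftrightarrow> (\<exists>i. 0 < i \<and> i < length P - 1 \<and> P ! i = x)"
  proof
    assume "\<exists>j<length P - 2. P ! Suc j = x"
    then obtain j where "j < length P - 2" "P ! Suc j = x" by auto
    then show "\<exists>i. 0 < i \<and> i < length P - 1 \<and> P ! i = x" by (intro exI[of _ "Suc j"]) auto
  next
    assume "\<exists>i. 0 < i \<and> i < length P - 1 \<and> P ! i = x"
    then obtain i where "0 < i" "i < length P - 1" "P ! i = x" by auto
    then show "\<exists>j<length P - 2. P ! Suc j = x" by (intro exI[of _ "i - 1"]) auto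
  qed
  finally show ?thesis .
qed

lemma interior_rev: "path_interior (rev P) = path_interior P"
proof
  show "path_interior (rev P) \<subseteq> path_interior P"
  proof
    fix x assume "x \<in> path_interior (rev P)"
    then obtain i where "0 < i" "i < length P - 1" "rev P ! i = x" by (auto simp: interior_iff)
    then show "x \<in> path_interior P" unfolding interior_iff
      by (intro exI[of _ "length P - Suc i"]) (auto simp: rev_nth)
  qed
next
  show "path_interior P \<subseteq> path_interior (rev P)"
  proof
    fix x assume "x \<in> path_interior P"
    then obtain i where "0 < i" "i < length P - 1" "P ! i = x" by (auto simp: interior_iff)
    then show "x \<in> path_interior (rev P)" unfolding interior_iff
      by (intro exI[of _ "length P - Suc i"]) (auto simp: rev_nth)
  qed
qed

lemma msp_rev:
  assumes "mono_super_path E col u v P"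
  shows "mono_super_path E col v u (rev P)"
proof -
  have ip: "is_path E P" and l3: "length P \<ge> 3" and h: "hd P = u" and la: "last P = v"
    and ex: "\<exists>c. \<forall>e\<in>path_edges P. col e = c"
    using assms unfolding mono_super_path_def by auto
  have ne: "P \<noteq> []" using l3 by auto
  have edge: "{rev P ! i, rev P ! Suc i} = {P ! (length P - 2 - i), P ! Suc (length P - 2 - i)}"
    if "Suc i < length P" for i
  proof -
    have "rev P ! i = P ! Suc (length P - 2 - i)" using that by (simp add: rev_nth Suc_diff_Suc)
    moreover have "rev P ! Suc i = P ! (length P - 2 - i)" using that by (simp add: rev_nth)
    ultimately show ?thesis by auto
  qed
  have "is_path E (rev P)"
    unfolding is_path_def
  proof (intro conjI allI impI)
    show "rev P \<noteq> []" using ne by simp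
    show "distinct (rev P)" using ip unfolding is_path_def by simp
    fix i assume "Suc i < length (rev P)"
    then have "Suc (length P - 2 - i) < length P" by simp
    then have "{P ! (length P - 2 - i), P ! Suc (length P - 2 - i)} \<in> E"
      using ip unfolding is_path_def by blast
    then show "{rev P ! i, rev P ! Suc i} \<in> E" using edge \<open>Suc i < length (rev P)\<close> by simp
  qed
  moreover have "path_edges (rev P) \<subseteq> path_edges P"
  proof
    fix e assume "e \<in> path_edges (rev P)"
    then obtain i where i: "Suc i < length P" "e = {rev P ! i, rev P ! Suc i}"
      unfolding path_edges_def by auto
    then have "e = {P ! (length P - 2 - i), P ! Suc (length P - 2 - i)}" using edge by simp
    moreover have "Suc (length P - 2 - i) < length P" using i by simp
    ultimately show "e \<in> path_edges P" unfolding path_edges_def by blast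
  qed
  ultimately show ?thesis using l3 h la ex ne unfolding mono_super_path_def
    by (auto simp: hd_rev last_rev)
qed



lemma dist_nth: "distinct P \<Longrightarrow> i < length P \<Longrightarrow> j < length P \<Longrightarrow> i \<noteq> j \<Longrightarrow> P ! i \<noteq> P ! j"
  by (simp add: nth_eq_iff_index_eq)

lemma msp_more:
  assumes "mono_super_path E col u v P"
  shows "{u, P ! 1} \<in> E" "{P ! 1, P ! 2} \<in> E" "col {P ! 1, P ! 2} = col {u, P ! 1}"
    "P ! 2 \<noteq> u" "P ! 1 \<noteq> u" "P ! 1 \<noteq> v"
    "{P ! (length P - 2), v} \<in> E" "col {P ! (length P - 2), v} = col {u, P ! 1}"
    "P ! 1 \<in> path_interior P" "P ! (length P - 2) \<in> path_interior P"
proof -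
  note b = msp_basic[OF assms]
  have l: "length P \<ge> 3" by (rule b(1))
  show "{u, P ! 1} \<in> E" using b(5)[of 0] b(2) l by auto
  show "{P ! 1, P ! 2} \<in> E" using b(5)[of 1] l by (auto simp: numeral_2_eq_2)
  show "col {P ! 1, P ! 2} = col {u, P ! 1}" using b(6)[of 1] b(2) l by (auto simp: numeral_2_eq_2)
  have "2 < length P" "0 < length P" using l by auto
  then have "P ! 2 \<noteq> P ! 0" using b(4) by (simp add: nth_eq_iff_index_eq)
  then show "P ! 2 \<noteq> u" using b(2) by simp
  have "1 < length P" "0 < length P" "length P - 1 < length P" "(1::nat) \<noteq> 0" "1 \<noteq> length P - 1"
    using l by auto
  then show "P ! 1 \<noteq> u" "P ! 1 \<noteq> v" using dist_nth[OF b(4)] b(2) b(3) by metis+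
  have s: "Suc (length P - 2) = length P - 1" using l by auto
  show "{P ! (length P - 2), v} \<in> E" using b(5)[of "length P - 2"] b(3) l s by auto
  show "col {P ! (length P - 2), v} = col {u, P ! 1}" using b(6)[of "length P - 2"] b(3) b(2) l s by auto
  show "P ! 1 \<in> path_interior P" unfolding interior_iff using l by (intro exI[of _ 1]) auto
  show "P ! (length P - 2) \<in> path_interior P" unfolding interior_iff using l
    by (intro exI[of _ "length P - 2"]) auto
qed

lemma msp_short:
  assumes "mono_super_path E col u v P" "P ! 1 = P ! (length P - 2)"
  shows "length P = 3"
proof -
  note b = msp_basic[OF assms(1)]
  have "1 = length P - 2" using assms(2) b(4) b(1) by (simp add: nth_eq_iff_index_eq)
  then show ?thesis by simp
qed

lemma sum_pairs:
  fixes g :: "'a set \<Rightarrow> nat"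
  assumes "finite S" "\<And>e. e \<in> S \<Longrightarrow> card e = 2"
  shows "(\<Sum>p\<in>{(u,v). {u,v} \<in> S}. g {fst p, snd p}) = 2 * (\<Sum>e\<in>S. g e)"
proof -
  let ?Q = "{(u,v). {u,v} \<in> S}"
  have fU: "finite (\<Union>S)" using assms by (metis card.infinite finite_Union zero_neq_numeral)
  have "?Q \<subseteq> (\<Union>S) \<times> (\<Union>S)" by auto
  then have fQ: "finite ?Q" using fU by (meson finite_SigmaI finite_subset)
  have img: "(\<lambda>p. {fst p, snd p}) ` ?Q \<subseteq> S" by auto
  have "(\<Sum>p\<in>?Q. g {fst p, snd p}) = (\<Sum>e\<in>S. \<Sum>p\<in>{p\<in>?Q. {fst p, snd p} = e}. g {fst p, snd p})"
    using sum.group[OF fQ assms(1) img, of "\<lambda>p. g {fst p, snd p}"] by simp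
  also have "\<dots> = (\<Sum>e\<in>S. 2 * g e)"
  proof (rule sum.cong)
    fix e assume e: "e \<in> S"
    then obtain a b where ab: "e = {a,b}" "a \<noteq> b" using assms(2) by (meson card_2_iff)
    have "{p\<in>?Q. {fst p, snd p} = e} = {(a,b),(b,a)}" using ab e by (auto simp: doubleton_eq_iff insert_commute)
    then show "(\<Sum>p\<in>{p\<in>?Q. {fst p, snd p} = e}. g {fst p, snd p}) = 2 * g e"
      using ab by (simp add: insert_commute)
  qed simp
  finally show ?thesis by (simp add: sum_distrib_left)
qed



locale tp_ctx =
  fixes V :: "'a set" and E :: "'a set set" and col :: "'a set \<Rightarrow> 'c" and f :: "'a set \<Rightarrow> nat"
    and Fam :: "'a \<Rightarrow> 'a \<Rightarrow> nat \<Rightarrow> 'a list"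
  assumes sg: "simple_graph V E"
    and Fmsp: "\<And>u v i. u \<in> V \<Longrightarrow> v \<in> V \<Longrightarrow> u \<noteq> v \<Longrightarrow> i < f {u,v} \<Longrightarrow>
                 mono_super_path E col u v (Fam u v i)"
    and Fdisj: "\<And>u v i j. u \<in> V \<Longrightarrow> v \<in> V \<Longrightarrow> u \<noteq> v \<Longrightarrow> i < f {u,v} \<Longrightarrow> j < f {u,v} \<Longrightarrow>
                 i \<noteq> j \<Longrightarrow> path_interior (Fam u v i) \<inter> path_interior (Fam u v j) = {}"
    and Frev: "\<And>u v i. u \<in> V \<Longrightarrow> v \<in> V \<Longrightarrow> u \<noteq> v \<Longrightarrow> Fam v u i = rev (Fam u v i)"
begin

lemma finV: "finite V" using sg by (simp add: simple_graph_def)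
lemma Esub: "e \<in> E \<Longrightarrow> e \<subseteq> V" using sg by (simp add: simple_graph_def)
lemma Ecard: "e \<in> E \<Longrightarrow> card e = 2" using sg by (simp add: simple_graph_def)
lemma finE: "finite E"
proof -
  have "E \<subseteq> Pow V" using Esub by auto
  then show ?thesis using finV by (meson finite_Pow_iff finite_subset)
qed
lemma edgeV: "{u, x} \<in> E \<Longrightarrow> u \<in> V \<and> x \<in> V \<and> u \<noteq> x"
  using Esub[of "{u,x}"] Ecard[of "{u,x}"] by (auto simp: card_insert_if split: if_splits)

definition "OP = {(u,v). u \<in> V \<and> v \<in> V \<and> u \<noteq> v}"
definition "Arcs = {(u,x). {u,x} \<in> E}"
definition "AS = (SIGMA p:Arcs. V - {fst p, snd p})"
definition "Idx = (SIGMA p:OP. {..< f {fst p, snd p}})"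
definition "slot q = (((fst (fst q)), Fam (fst (fst q)) (snd (fst q)) (snd q) ! 1), snd (fst q))"
definition "Used = slot ` Idx"

lemma finOP': "finite OP"
proof -
  have "OP \<subseteq> V \<times> V" unfolding OP_def by auto
  then show ?thesis using finV by (meson finite_SigmaI finite_subset)
qed

lemma finArcs: "finite Arcs"
proof -
  have "Arcs \<subseteq> V \<times> V" unfolding Arcs_def using edgeV by auto
  then show ?thesis using finV by (meson finite_SigmaI finite_subset)
qed

lemma finAS: "finite AS"
  unfolding AS_def using finArcs finV by auto

lemma card_Arcs: "card Arcs = 2 * card E"
proof -
  have "(\<Sum>p\<in>{(u,v). {u,v} \<in> E}. (\<lambda>e. 1::nat) {fst p, snd p}) = 2 * (\<Sum>e\<in>E. (\<lambda>e. 1::nat) e)"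
    by (rule sum_pairs[OF finE Ecard])
  then show ?thesis unfolding Arcs_def by simp
qed

lemma card_AS: "card AS = 2 * card E * (card V - 2)"
proof -
  have "card AS = (\<Sum>p\<in>Arcs. card (V - {fst p, snd p}))"
    unfolding AS_def using finArcs finV by simp
  also have "\<dots> = (\<Sum>p\<in>Arcs. card V - 2)"
  proof (rule sum.cong)
    fix p assume "p \<in> Arcs"
    then have "fst p \<in> V" "snd p \<in> V" "fst p \<noteq> snd p" unfolding Arcs_def using edgeV by auto
    then show "card (V - {fst p, snd p}) = card V - 2"
      using finV by (simp add: card_Diff_subset)
  qed simp
  finally show ?thesis using card_Arcs by simp
qed

lemma AS_iff: "((u,x),v) \<in> AS \<longleftrightarrow> {u,x} \<in> E \<and> v \<in> V \<and> v \<noteq> u \<and> v \<noteq> x"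
  unfolding AS_def Arcs_def by auto

lemma slot_inj: "inj_on slot Idx"
proof (rule inj_onI)
  fix q q' assume q: "q \<in> Idx" and q': "q' \<in> Idx" and eq: "slot q = slot q'"
  obtain u v i where qq: "q = ((u,v),i)" by (metis prod.collapse)
  obtain u' v' i' where qq': "q' = ((u',v'),i')" by (metis prod.collapse)
  have uv: "u \<in> V" "v \<in> V" "u \<noteq> v" "i < f {u,v}" using q qq unfolding Idx_def OP_def by auto
  have same: "u' = u" "v' = v" using eq qq qq' unfolding slot_def by auto
  have i': "i' < f {u,v}" using q' qq' same unfolding Idx_def OP_def by auto
  have x: "Fam u v i ! 1 = Fam u v i' ! 1" using eq qq qq' same unfolding slot_def by auto
  have "i = i'"
  proof (rule ccontr)
    assume "i \<noteq> i'"
    then have "path_interior (Fam u v i) \<inter> path_interior (Fam u v i') = {}"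
      using Fdisj uv i' by blast
    moreover have "Fam u v i ! 1 \<in> path_interior (Fam u v i)"
      using msp_more(9)[OF Fmsp[OF uv]] .
    moreover have "Fam u v i' ! 1 \<in> path_interior (Fam u v i')"
      using msp_more(9)[OF Fmsp[OF uv(1-3) i']] .
    ultimately show False using x by auto
  qed
  then show "q = q'" using qq qq' same by simp
qed

lemma finIdx: "finite Idx" unfolding Idx_def using finOP' by auto

lemma card_Used_sum: "card Used = (\<Sum>p\<in>OP. f {fst p, snd p})"
proof -
  have "card Used = card Idx" unfolding Used_def using slot_inj by (simp add: card_image)
  also have "\<dots> = (\<Sum>p\<in>OP. f {fst p, snd p})" unfolding Idx_def using finOP' by simp
  finally show ?thesis .
qed

lemma card_Used: "card Used = 2 * weight V f"
proof -
  have fS: "finite {e. e \<subseteq> V \<and> card e = 2}" using finV by (rule finite_subset[rotated, OF finite_Pow_iff[THEN iffD2]]) auto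
  have "OP = {(u,v). {u,v} \<in> {e. e \<subseteq> V \<and> card e = 2}}"
    unfolding OP_def by (auto simp: card_insert_if split: if_splits)
  then have "(\<Sum>p\<in>OP. f {fst p, snd p}) = 2 * (\<Sum>e\<in>{e. e \<subseteq> V \<and> card e = 2}. f e)"
    using sum_pairs[OF fS, of f] by simp
  then show ?thesis using card_Used_sum unfolding weight_def by simp
qed

lemma Used_E:
  assumes "((u,x),v) \<in> Used"
  obtains i where "u \<in> V" "v \<in> V" "u \<noteq> v" "i < f {u,v}" "Fam u v i ! 1 = x"
proof -
  obtain q where q: "q \<in> Idx" "slot q = ((u,x),v)" using assms unfolding Used_def by auto
  obtain u' v' i where qq: "q = ((u',v'),i)" by (metis prod.collapse)
  show ?thesis using q qq that unfolding Idx_def OP_def slot_def by auto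
qed

lemma Used_AS: "Used \<subseteq> AS"
proof
  fix s assume s: "s \<in> Used"
  obtain u x v where sx: "s = ((u,x),v)" by (metis prod.collapse)
  obtain i where i: "u \<in> V" "v \<in> V" "u \<noteq> v" "i < f {u,v}" "Fam u v i ! 1 = x"
    using Used_E s sx by metis
  note m = msp_more[OF Fmsp[OF i(1-4)]]
  show "s \<in> AS" unfolding sx AS_iff using m(1,6) i by auto
qed

end


context tp_ctx
begin

definition "Nc c x = {y. {x,y} \<in> E \<and> col {x,y} = c}"
definition "Lf c = (\<exists>x1 x2 u1 u2. x1 \<noteq> x2 \<and> Nc c x1 = {u1} \<and> Nc c x2 = {u2})"
definition "Sp c = (\<forall>x\<in>V. Nc c x \<noteq> {})"
definition "c0 = (if \<exists>c\<in>col ` E. Sp c then SOME c. c \<in> col ` E \<and> Sp c else SOME c. c \<in> col ` E)"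
definition "ZA c = {((u,x),v). ((u,x),v) \<in> AS \<and> col {u,x} = c \<and> Nc c x = {u}}"
definition "ZB c = {((u,x),v). ((u,x),v) \<in> AS \<and> col {u,x} = c \<and> Nc c v = {}}"
definition "ZC c = {((u,x),v). ((u,x),v) \<in> AS \<and> ((u,x),v) \<notin> Used \<and> {x,v} \<in> E \<and>
                      {col {u,x}, col {x,v}} = {c, c0}}"
definition "Z c = (if Lf c then ZA c else if Sp c then ZC c else ZB c)"

lemma Nc_iff: "y \<in> Nc c x \<longleftrightarrow> {x,y} \<in> E \<and> col {x,y} = c"
  unfolding Nc_def by simp

lemma Nc_sub: "Nc c x \<subseteq> V"
  unfolding Nc_def using edgeV by auto

lemma Nc_fin: "finite (Nc c x)"
  using Nc_sub finV finite_subset by blast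

lemma leaf_unused:
  assumes "((u,x),v) \<in> Used" "Nc (col {u,x}) x = {u}"
  shows False
proof -
  obtain i where i: "u \<in> V" "v \<in> V" "u \<noteq> v" "i < f {u,v}" "Fam u v i ! 1 = x"
    using Used_E assms(1) by metis
  note m = msp_more[OF Fmsp[OF i(1-4)]]
  have "Fam u v i ! 2 \<in> Nc (col {u,x}) x" unfolding Nc_iff using m(2,3) i(5) by simp
  then show False using assms(2) m(4) by auto
qed

lemma span_unused:
  assumes "((u,x),v) \<in> Used" "Nc (col {u,x}) v = {}"
  shows False
proof -
  obtain i where i: "u \<in> V" "v \<in> V" "u \<noteq> v" "i < f {u,v}" "Fam u v i ! 1 = x"
    using Used_E assms(1) by metis
  note m = msp_more[OF Fmsp[OF i(1-4)]]
  have "Fam u v i ! (length (Fam u v i) - 2) \<in> Nc (col {u,x}) v" unfolding Nc_iff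
    using m(7,8) i(5) by (simp add: insert_commute)
  then show False using assms(2) by auto
qed

lemma bich:
  assumes "((y,x),y') \<in> Used" "((y',x),y) \<in> Used"
  shows "col {y,x} = col {x,y'}"
proof -
  obtain i where i: "y \<in> V" "y' \<in> V" "y \<noteq> y'" "i < f {y,y'}" "Fam y y' i ! 1 = x"
    using Used_E assms(1) by metis
  obtain j where j: "j < f {y',y}" "Fam y' y j ! 1 = x"
    using Used_E assms(2) by metis
  have j': "j < f {y,y'}" using j(1) by (simp add: insert_commute)
  define P where "P = Fam y y' i"
  define Q where "Q = Fam y y' j"
  have mP: "mono_super_path E col y y' P" unfolding P_def using Fmsp[OF i(1-4)] .
  have mQ: "mono_super_path E col y y' Q" unfolding Q_def using Fmsp[OF i(1-3) j'] .
  have lQ: "length Q \<ge> 3" using msp_basic(1)[OF mQ] .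
  have "rev Q ! 1 = x" using j(2) Frev[OF i(1-3)] unfolding Q_def by simp
  then have Qx: "Q ! (length Q - 2) = x" using lQ by (simp add: rev_nth numeral_2_eq_2)
  have xP: "x \<in> path_interior P" using msp_more(9)[OF mP] i(5) unfolding P_def by simp
  have xQ: "x \<in> path_interior Q" using msp_more(10)[OF mQ] Qx by simp
  have "i = j"
  proof (rule ccontr)
    assume "i \<noteq> j"
    then have "path_interior P \<inter> path_interior Q = {}"
      unfolding P_def Q_def using Fdisj[OF i(1-4) j'] by blast
    then show False using xP xQ by auto
  qed
  then have PQ: "P = Q" unfolding P_def Q_def by simp
  have P1: "P ! 1 = x" using i(5) unfolding P_def by simp
  have "length P = 3" using msp_short[OF mP] P1 Qx PQ by simp
  then show ?thesis using msp_more(8)[OF mP] P1 by (simp add: insert_commute)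
qed

lemma Z_sub: "Z c \<subseteq> AS"
  unfolding Z_def ZA_def ZB_def ZC_def by auto

lemma Z_unused: "Z c \<inter> Used = {}"
proof -
  have "ZA c \<inter> Used = {}" unfolding ZA_def using leaf_unused by blast
  moreover have "ZB c \<inter> Used = {}" unfolding ZB_def using span_unused by blast
  moreover have "ZC c \<inter> Used = {}" unfolding ZC_def by blast
  ultimately show ?thesis unfolding Z_def by auto
qed

lemma Z_col:
  assumes "((u,x),v) \<in> Z c"
  shows "col {u,x} = c \<or> {col {u,x}, col {x,v}} = {c, c0}"
  using assms unfolding Z_def ZA_def ZB_def ZC_def by (auto split: if_splits)

lemma Z_disj:
  assumes "c \<noteq> c0" "c' \<noteq> c0" "c \<noteq> c'"
  shows "Z c \<inter> Z c' = {}"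
proof (rule ccontr)
  assume "Z c \<inter> Z c' \<noteq> {}"
  then obtain u x v where s: "((u,x),v) \<in> Z c" "((u,x),v) \<in> Z c'" by auto
  show False using Z_col[OF s(1)] Z_col[OF s(2)] assms by (auto simp: doubleton_eq_iff)
qed

end


context tp_ctx
begin

lemma fin_sub_AS: "S \<subseteq> AS \<Longrightarrow> finite S"
  using finAS finite_subset by blast

lemma caseA:
  assumes "Lf c"
  shows "2 * (card V - 2) \<le> card (ZA c)"
proof -
  obtain x1 x2 u1 u2 where l: "x1 \<noteq> x2" "Nc c x1 = {u1}" "Nc c x2 = {u2}"
    using assms unfolding Lf_def by auto
  have e1: "{x1,u1} \<in> E" "col {x1,u1} = c" using l(2) Nc_iff[of u1 c x1] by auto
  have e2: "{x2,u2} \<in> E" "col {x2,u2} = c" using l(3) Nc_iff[of u2 c x2] by auto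
  have v1: "x1 \<in> V" "u1 \<in> V" "x1 \<noteq> u1" using edgeV[OF e1(1)] by auto
  have v2: "x2 \<in> V" "u2 \<in> V" "x2 \<noteq> u2" using edgeV[OF e2(1)] by auto
  define S1 where "S1 = (\<lambda>v. ((u1,x1),v)) ` (V - {u1,x1})"
  define S2 where "S2 = (\<lambda>v. ((u2,x2),v)) ` (V - {u2,x2})"
  have sub: "S1 \<union> S2 \<subseteq> ZA c"
    unfolding S1_def S2_def ZA_def AS_iff using e1 e2 l by (auto simp: insert_commute)
  have d: "S1 \<inter> S2 = {}" unfolding S1_def S2_def using l(1) by auto
  have k1: "card {u1,x1} = 2" "card {u2,x2} = 2" using v1 v2 by auto
  have c1: "card S1 = card V - 2" unfolding S1_def
    by (subst card_image) (auto intro: inj_onI simp: card_Diff_subset finV v1 k1)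
  have c2: "card S2 = card V - 2" unfolding S2_def
    by (subst card_image) (auto intro: inj_onI simp: card_Diff_subset finV v2 k1)
  have "ZA c \<subseteq> AS" unfolding ZA_def by auto
  then have fZ: "finite (ZA c)" using fin_sub_AS by auto
  have "card (S1 \<union> S2) = card S1 + card S2"
    using d fZ sub by (meson card_Un_disjoint finite_subset le_sup_iff)
  then have "card S1 + card S2 \<le> card (ZA c)" using card_mono[OF fZ sub] by simp
  then show ?thesis using c1 c2 by simp
qed

lemma two_elems:
  assumes "finite S" "2 \<le> card S"
  obtains a b where "a \<in> S" "b \<in> S" "a \<noteq> b"
proof -
  have "\<not> card S \<le> Suc 0" using assms(2) by simp
  then show ?thesis using card_le_Suc0_iff_eq[OF assms(1)] that by blast
qed

lemma caseC:
  assumes nl: "\<not> Lf c" and sc: "Sp c" and s0: "Sp c0" and cc: "c \<noteq> c0"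
  shows "2 * (card V - 2) \<le> card (ZC c)"
proof -
  define X where "X = {x \<in> V. 2 \<le> card (Nc c x)}"
  have XV: "X \<subseteq> V" unfolding X_def by auto
  have "card (V - X) \<le> Suc 0"
  proof (subst card_le_Suc0_iff_eq)
    show "finite (V - X)" using finV by simp
    show "\<forall>a\<in>V - X. \<forall>b\<in>V - X. a = b"
    proof (intro ballI, rule ccontr)
      fix a b assume a: "a \<in> V - X" and b: "b \<in> V - X" and ab: "a \<noteq> b"
      have "\<exists>u. Nc c y = {u}" if "y \<in> V - X" for y
      proof -
        have "Nc c y \<noteq> {}" using sc that unfolding Sp_def by auto
        moreover have "card (Nc c y) < 2" using that unfolding X_def by auto
        ultimately have "card (Nc c y) = 1" using Nc_fin[of c y] by (simp add: card_gt_0_iff less_2_cases_iff)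
        then show ?thesis by (simp add: card_1_singleton_iff)
      qed
      then show False using a b ab nl unfolding Lf_def by blast
    qed
  qed
  then have cX: "card V - 1 \<le> card X"
    using card_Diff_subset[OF finite_subset[OF XV finV] XV] card_mono[OF finV XV] by simp
  define S where "S = (\<lambda>x. {s \<in> ZC c. snd (fst s) = x})"
  have "ZC c \<subseteq> AS" unfolding ZC_def by auto
  then have fZC: "finite (ZC c)" using fin_sub_AS by auto
  have S2: "2 \<le> card (S x)" if xX: "x \<in> X" for x
  proof -
    have xV: "x \<in> V" and c2: "2 \<le> card (Nc c x)" using xX unfolding X_def by auto
    obtain y1 y2 where y: "y1 \<in> Nc c x" "y2 \<in> Nc c x" "y1 \<noteq> y2"
      using two_elems[OF Nc_fin c2] by metis
    obtain y' where y': "y' \<in> Nc c0 x" using s0 xV unfolding Sp_def by auto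
    have ey: "{x,y1} \<in> E" "col {x,y1} = c" "{x,y2} \<in> E" "col {x,y2} = c" "{x,y'} \<in> E" "col {x,y'} = c0"
      using y y' unfolding Nc_iff by auto
    have vs: "y1 \<in> V" "y2 \<in> V" "y' \<in> V" "x \<noteq> y1" "x \<noteq> y2" "x \<noteq> y'"
      using edgeV[OF ey(1)] edgeV[OF ey(3)] edgeV[OF ey(5)] by auto
    have ny: "y' \<noteq> y1" "y' \<noteq> y2" using ey cc by auto
    have pick: "\<exists>s\<in>{((yy,x),y'), ((y',x),yy)}. s \<in> S x" if yy: "yy \<in> Nc c x" for yy
    proof -
      have eyy: "{x,yy} \<in> E" "col {x,yy} = c" using yy unfolding Nc_iff by auto
      have vyy: "yy \<in> V" "x \<noteq> yy" using edgeV[OF eyy(1)] by auto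
      have nyy: "y' \<noteq> yy" using eyy ey cc by auto
      have notboth: "\<not> (((yy,x),y') \<in> Used \<and> ((y',x),yy) \<in> Used)"
        using bich[of yy x y'] eyy ey cc by (auto simp: insert_commute)
      have in1: "((yy,x),y') \<in> AS" "((y',x),yy) \<in> AS" unfolding AS_iff
        using eyy ey vyy vs nyy by (auto simp: insert_commute)
      have cs: "{col {yy,x}, col {x,y'}} = {c, c0}" "{col {y',x}, col {x,yy}} = {c, c0}"
        using eyy ey by (auto simp: insert_commute)
      show ?thesis
      proof (cases "((yy,x),y') \<in> Used")
        case True
        then have "((y',x),yy) \<in> ZC c" unfolding ZC_def using notboth in1 cs eyy by auto
        then show ?thesis unfolding S_def by auto
      next
        case False
        then have "((yy,x),y') \<in> ZC c" unfolding ZC_def using in1 cs ey by auto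
        then show ?thesis unfolding S_def by auto
      qed
    qed
    obtain s1 where s1: "s1 \<in> {((y1,x),y'), ((y',x),y1)}" "s1 \<in> S x" using pick[OF y(1)] by blast
    obtain s2 where s2: "s2 \<in> {((y2,x),y'), ((y',x),y2)}" "s2 \<in> S x" using pick[OF y(2)] by blast
    have "s1 \<noteq> s2" using s1(1) s2(1) y(3) ny by auto
    moreover have "finite (S x)" unfolding S_def using fZC by auto
    ultimately have "card {s1,s2} \<le> card (S x)" using s1 s2 by (intro card_mono) auto
    then show ?thesis using \<open>s1 \<noteq> s2\<close> by simp
  qed
  have UN: "(\<Union>x\<in>X. S x) \<subseteq> ZC c" unfolding S_def by auto
  have fX: "finite X" using finite_subset[OF XV finV] .
  have "card (\<Union>x\<in>X. S x) = (\<Sum>x\<in>X. card (S x))"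
    by (rule card_UN_disjoint) (use fX fZC in \<open>auto simp: S_def\<close>)
  also have "\<dots> \<ge> (\<Sum>x\<in>X. 2)" by (rule sum_mono) (use S2 in auto)
  finally have "2 * card X \<le> card (\<Union>x\<in>X. S x)" by simp
  also have "\<dots> \<le> card (ZC c)" by (rule card_mono[OF fZC UN])
  finally show ?thesis using cX by simp
qed

end


context tp_ctx
begin

lemma caseB:
  assumes nl: "\<not> Lf c" and ns: "\<not> Sp c" and cE: "c \<in> col ` E"
  shows "2 * (card V - 2) \<le> card (ZB c)"
proof -
  obtain z0 where z0: "z0 \<in> V" "Nc c z0 = {}" using ns unfolding Sp_def by auto
  obtain ee where ee: "ee \<in> E" "col ee = c" using cE by auto
  obtain a b where ab: "ee = {a,b}" "a \<noteq> b" using Ecard[OF ee(1)] by (meson card_2_iff)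
  have eab: "{a,b} \<in> E" "col {a,b} = c" using ee ab by auto
  have vab: "a \<in> V" "b \<in> V" using edgeV[OF eab(1)] by auto
  define M where "M = {w \<in> V. Nc c w = {}}"
  define W where "W = V - M"
  have MV: "M \<subseteq> V" unfolding M_def by auto
  have fM: "finite M" using finite_subset[OF MV finV] .
  have fW: "finite W" unfolding W_def using finV by auto
  have bNa: "b \<in> Nc c a" using eab unfolding Nc_iff by auto
  have aNb: "a \<in> Nc c b" using eab unfolding Nc_iff by (auto simp: insert_commute)
  have aW: "a \<in> W" "b \<in> W" using vab bNa aNb unfolding W_def M_def by auto
  have z0M: "z0 \<in> M" using z0 unfolding M_def by auto
  have cMW: "card M + card W = card V" unfolding W_def
    using card_Diff_subset[OF fM MV] card_mono[OF finV MV] by simp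
  have cM: "1 \<le> card M" using z0M fM by (metis One_nat_def Suc_leI card_gt_0_iff empty_iff)
  have cW: "2 \<le> card W"
  proof -
    have "card {a,b} \<le> card W" using aW fW by (intro card_mono) auto
    then show ?thesis using ab(2) by simp
  qed
  define G1 where "G1 = (\<lambda>w. ((a,b),w)) ` (M - {z0}) \<union> (\<lambda>w. ((b,a),w)) ` (M - {z0})"
  define G2 where "G2 = (\<Union>y\<in>W. (\<lambda>u. ((u,y),z0)) ` (Nc c y))"
  have G1sub: "G1 \<subseteq> ZB c"
  proof
    fix s assume "s \<in> G1"
    then obtain w where w: "w \<in> M" "w \<noteq> z0" "s = ((a,b),w) \<or> s = ((b,a),w)" unfolding G1_def by auto
    have "w \<in> V" "Nc c w = {}" "w \<noteq> a" "w \<noteq> b" using w aW unfolding M_def W_def by auto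
    then show "s \<in> ZB c" using w(3) eab unfolding ZB_def AS_iff by (auto simp: insert_commute)
  qed
  have G2sub: "G2 \<subseteq> ZB c"
  proof
    fix s assume "s \<in> G2"
    then obtain y u where yu: "y \<in> W" "u \<in> Nc c y" "s = ((u,y),z0)" unfolding G2_def by auto
    have e: "{y,u} \<in> E" "col {y,u} = c" using yu(2) unfolding Nc_iff by auto
    have "y \<in> Nc c u" using e unfolding Nc_iff by (auto simp: insert_commute)
    then have "z0 \<noteq> u" using z0 by auto
    moreover have "z0 \<noteq> y" using yu(1) z0M unfolding W_def by auto
    ultimately show "s \<in> ZB c" using yu(3) e z0 unfolding ZB_def AS_iff by (auto simp: insert_commute)
  qed
  have dG: "G1 \<inter> G2 = {}" unfolding G1_def G2_def by auto
  have cG1: "card G1 = 2 * (card M - 1)"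
  proof -
    have d: "(\<lambda>w. ((a,b),w)) ` (M - {z0}) \<inter> (\<lambda>w. ((b,a),w)) ` (M - {z0}) = {}" using ab(2) by auto
    have "card ((\<lambda>w. ((a,b),w)) ` (M - {z0})) = card M - 1"
      by (subst card_image) (auto intro: inj_onI simp: fM z0M)
    moreover have "card ((\<lambda>w. ((b,a),w)) ` (M - {z0})) = card M - 1"
      by (subst card_image) (auto intro: inj_onI simp: fM z0M)
    ultimately show ?thesis unfolding G1_def using d fM by (simp add: card_Un_disjoint)
  qed
  have cG2: "card G2 = (\<Sum>y\<in>W. card (Nc c y))"
  proof -
    have "card G2 = (\<Sum>y\<in>W. card ((\<lambda>u. ((u,y),z0)) ` (Nc c y)))"
      unfolding G2_def by (rule card_UN_disjoint) (use fW Nc_fin in auto)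
    also have "\<dots> = (\<Sum>y\<in>W. card (Nc c y))"
      by (rule sum.cong) (auto simp: card_image inj_on_def)
    finally show ?thesis .
  qed
  have pos: "1 \<le> card (Nc c y)" if "y \<in> W" for y
  proof -
    have "Nc c y \<noteq> {}" using that unfolding W_def M_def by auto
    then show ?thesis using Nc_fin[of c y] by (simp add: Suc_leI card_gt_0_iff)
  qed
  have sumW: "2 * card W - 1 \<le> (\<Sum>y\<in>W. card (Nc c y))"
  proof (cases "\<exists>y0\<in>W. card (Nc c y0) < 2")
    case True
    then obtain y0 where y0: "y0 \<in> W" "card (Nc c y0) < 2" by auto
    have l0: "\<exists>u. Nc c y0 = {u}"
      using pos[OF y0(1)] y0(2) by (simp add: card_1_singleton_iff[symmetric])
    have others: "2 \<le> card (Nc c y)" if "y \<in> W - {y0}" for y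
    proof (rule ccontr)
      assume "\<not> 2 \<le> card (Nc c y)"
      then have "\<exists>u. Nc c y = {u}" using pos[of y] that by (simp add: card_1_singleton_iff[symmetric])
      then show False using l0 nl that unfolding Lf_def by blast
    qed
    have "(\<Sum>y\<in>W. card (Nc c y)) = card (Nc c y0) + (\<Sum>y\<in>W - {y0}. card (Nc c y))"
      using fW y0(1) by (simp add: sum.remove)
    also have "\<dots> \<ge> 1 + (\<Sum>y\<in>W - {y0}. 2)"
      using pos[OF y0(1)] sum_mono[of "W - {y0}" "\<lambda>_. 2" "\<lambda>y. card (Nc c y)"] others
      by (meson add_mono)
    finally show ?thesis using fW y0(1) cW by (simp add: card_Diff_singleton)
  next
    case False
    then have "(\<Sum>y\<in>W. 2) \<le> (\<Sum>y\<in>W. card (Nc c y))" by (intro sum_mono) (simp add: not_less)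
    then show ?thesis by simp
  qed
  have fZB: "finite (ZB c)"
  proof -
    have "ZB c \<subseteq> AS" unfolding ZB_def by auto
    then show ?thesis using fin_sub_AS by auto
  qed
  have "card (G1 \<union> G2) = card G1 + card G2"
    using dG fZB G1sub G2sub by (meson card_Un_disjoint finite_subset)
  moreover have "card (G1 \<union> G2) \<le> card (ZB c)" using G1sub G2sub fZB by (intro card_mono) auto
  ultimately show ?thesis using cG1 cG2 sumW cMW cM cW by linarith
qed

end


context tp_ctx
begin

lemma c0_mem:
  assumes ne: "col ` E \<noteq> {}"
  shows "c0 \<in> col ` E"
proof (cases "\<exists>c\<in>col ` E. Sp c")
  case True
  then have "c0 = (SOME c. c \<in> col ` E \<and> Sp c)" unfolding c0_def by simp
  moreover have "\<exists>c. c \<in> col ` E \<and> Sp c" using True by blast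
  ultimately show ?thesis using someI_ex[of "\<lambda>c. c \<in> col ` E \<and> Sp c"] by simp
next
  case False
  then have "c0 = (SOME c. c \<in> col ` E)" unfolding c0_def by simp
  moreover have "\<exists>c. c \<in> col ` E" using ne by blast
  ultimately show ?thesis using someI_ex[of "\<lambda>c. c \<in> col ` E"] by simp
qed

lemma c0_sp: "Sp c \<Longrightarrow> c \<in> col ` E \<Longrightarrow> Sp c0"
proof -
  assume a: "Sp c" "c \<in> col ` E"
  then have ex: "\<exists>c\<in>col ` E. Sp c" by auto
  then have "c0 = (SOME c. c \<in> col ` E \<and> Sp c)" unfolding c0_def by simp
  then show "Sp c0" using someI_ex[of "\<lambda>c. c \<in> col ` E \<and> Sp c"] ex by auto
qed

lemma Z_card:
  assumes "c \<in> col ` E" "c \<noteq> c0"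
  shows "2 * (card V - 2) \<le> card (Z c)"
proof (cases "Lf c")
  case True
  then show ?thesis using caseA unfolding Z_def by simp
next
  case False
  show ?thesis
  proof (cases "Sp c")
    case True
    then show ?thesis using caseC[OF False True c0_sp[OF True assms(1)] assms(2)] False
      unfolding Z_def by simp
  next
    case F2: False
    then show ?thesis using caseB[OF False F2 assms(1)] False unfolding Z_def by simp
  qed
qed

lemma main_ineq: "weight V f + (card V - 2) * (card (col ` E) - 1) \<le> card E * (card V - 2)"
proof -
  define I where "I = col ` E - {c0}"
  define Zall where "Zall = (\<Union>c\<in>I. Z c)"
  have fI: "finite I" unfolding I_def using finE by simp
  have fZ: "finite (Z c)" for c using Z_sub fin_sub_AS by blast
  have cZall: "card Zall = (\<Sum>c\<in>I. card (Z c))"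
    unfolding Zall_def
  proof (rule card_UN_disjoint)
    show "finite I" by (rule fI)
    show "\<forall>i\<in>I. finite (Z i)" using fZ by blast
    show "\<forall>i\<in>I. \<forall>j\<in>I. i \<noteq> j \<longrightarrow> Z i \<inter> Z j = {}"
      unfolding I_def using Z_disj by blast
  qed
  have "(\<Sum>c\<in>I. 2 * (card V - 2)) \<le> (\<Sum>c\<in>I. card (Z c))"
    by (rule sum_mono) (use Z_card in \<open>auto simp: I_def\<close>)
  then have lb: "card I * (2 * (card V - 2)) \<le> card Zall" using cZall by simp
  have cI: "card I = card (col ` E) - 1"
  proof (cases "col ` E = {}")
    case True then show ?thesis unfolding I_def by simp
  next
    case False then show ?thesis unfolding I_def using c0_mem finE by (simp add: card_Diff_singleton)
  qed
  have sub: "Zall \<subseteq> AS" unfolding Zall_def using Z_sub by auto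
  have dis: "Zall \<inter> Used = {}" unfolding Zall_def using Z_unused by auto
  have fU: "finite Used" using Used_AS finAS finite_subset by blast
  have fZa: "finite Zall" using sub finAS finite_subset by blast
  have "card (Used \<union> Zall) = card Used + card Zall"
    using card_Un_disjoint[OF fU fZa] dis by blast
  moreover have "card (Used \<union> Zall) \<le> card AS" using sub Used_AS finAS by (intro card_mono) auto
  ultimately have "card Used + card Zall \<le> card AS" by simp
  then have "2 * weight V f + card I * (2 * (card V - 2)) \<le> 2 * card E * (card V - 2)"
    using lb card_Used card_AS by simp
  moreover have "card I * (2 * (card V - 2)) = 2 * ((card V - 2) * card I)" by simp
  moreover have "2 * card E * (card V - 2) = 2 * (card E * (card V - 2))" by simp
  ultimately show ?thesis unfolding cI[symmetric] by linarith
qed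

end



theorem theorem2p10:
  fixes V :: "'a set" and E :: "'a set set" and col :: "'a set \<Rightarrow> 'c"
    and f :: "'a set \<Rightarrow> nat" and n r :: nat
  assumes "simple_graph V E"
    and "card V = n" and "n \<ge> 3"
    and "card (col ` E) = r"
    and "\<And>u v. u \<in> V \<Longrightarrow> v \<in> V \<Longrightarrow> u \<noteq> v \<Longrightarrow>
           has_disjoint_mono_super_paths E col u v (f {u, v})"
  shows "int (card E) \<ge> \<lceil>real (weight V f) / real (n - 2)\<rceil> + int r - 1"
proof -
  define Pr where "Pr = (\<lambda>u v (P :: nat \<Rightarrow> 'a list). (\<forall>i<f {u,v}. mono_super_path E col u v (P i)) \<and>
      (\<forall>i<f {u,v}. \<forall>j<f {u,v}. i \<noteq> j \<longrightarrow> path_interior (P i) \<inter> path_interior (P j) = {}))"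
  define famo where "famo = (\<lambda>u v. SOME P. Pr u v P)"
  have famo: "Pr u v (famo u v)" if "u \<in> V" "v \<in> V" "u \<noteq> v" for u v
  proof -
    have "\<exists>P. Pr u v P" using assms(5)[OF that] unfolding has_disjoint_mono_super_paths_def Pr_def .
    then show ?thesis unfolding famo_def by (rule someI_ex)
  qed
  define Fam where "Fam = (\<lambda>u v. if (SOME a. a \<in> {u,v}) = u then famo u v else (\<lambda>i. rev (famo v u i)))"
  have cases_uv: "(Fam u v = famo u v \<and> Fam v u = (\<lambda>i. rev (famo u v i))) \<or>
                  (Fam u v = (\<lambda>i. rev (famo v u i)) \<and> Fam v u = famo v u)" if "u \<noteq> v" for u v :: 'a
  proof -
    define a where "a = (SOME a. a \<in> {u,v})"
    have a: "a \<in> {u,v}" unfolding a_def by (rule someI[of _ u]) simp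
    have a': "(SOME a. a \<in> {v,u}) = a" unfolding a_def by (simp add: insert_commute)
    show ?thesis
    proof (cases "a = u")
      case True
      then show ?thesis unfolding Fam_def using a' a_def that by auto
    next
      case False
      then have "a = v" using a by auto
      then show ?thesis unfolding Fam_def using a' a_def False by auto
    qed
  qed
  have fsym: "f {v,u} = f {u,v}" for u v by (simp add: insert_commute)
  interpret T: tp_ctx V E col f Fam
  proof
    show "simple_graph V E" by (rule assms(1))
  next
    fix u v i assume uv: "u \<in> V" "v \<in> V" "u \<noteq> v" "i < f {u,v}"
    show "mono_super_path E col u v (Fam u v i)"
      using cases_uv[OF uv(3)]
    proof
      assume "Fam u v = famo u v \<and> Fam v u = (\<lambda>i. rev (famo u v i))"
      then show ?thesis using famo[OF uv(1-3)] uv(4) unfolding Pr_def by auto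
    next
      assume "Fam u v = (\<lambda>i. rev (famo v u i)) \<and> Fam v u = famo v u"
      moreover have "mono_super_path E col v u (famo v u i)"
        using famo[OF uv(2,1) uv(3)[symmetric]] uv(4) fsym unfolding Pr_def by auto
      ultimately show ?thesis using msp_rev by auto
    qed
  next
    fix u v i j assume uv: "u \<in> V" "v \<in> V" "u \<noteq> v" "i < f {u,v}" "j < f {u,v}" "i \<noteq> j"
    show "path_interior (Fam u v i) \<inter> path_interior (Fam u v j) = {}"
      using cases_uv[OF uv(3)]
    proof
      assume "Fam u v = famo u v \<and> Fam v u = (\<lambda>i. rev (famo u v i))"
      then show ?thesis using famo[OF uv(1-3)] uv(4-6) unfolding Pr_def by auto
    next
      assume "Fam u v = (\<lambda>i. rev (famo v u i)) \<and> Fam v u = famo v u"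
      moreover have "path_interior (famo v u i) \<inter> path_interior (famo v u j) = {}"
        using famo[OF uv(2,1) uv(3)[symmetric]] uv(4-6) fsym unfolding Pr_def by auto
      ultimately show ?thesis by (simp add: interior_rev)
    qed
  next
    fix u v i assume uv: "u \<in> V" "v \<in> V" "u \<noteq> v"
    show "Fam v u i = rev (Fam u v i)" using cases_uv[OF uv(3)] by auto
  qed
  have ineq: "weight V f + (n - 2) * (r - 1) \<le> card E * (n - 2)"
    using T.main_ineq assms(2,4) by simp
  define k where "k = n - 2"
  have kpos: "real k > 0" unfolding k_def using assms(3) by simp
  have rineq: "real (weight V f) + real k * real (r - 1) \<le> real (card E) * real k"
    using ineq unfolding k_def by (metis of_nat_add of_nat_le_iff of_nat_mult)
  have "real (weight V f) \<le> real k * (real (card E) - real r + 1)"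
  proof (cases "r = 0")
    case True
    then show ?thesis using rineq kpos by (simp add: algebra_simps)
  next
    case False
    then have "real (r - 1) = real r - 1" by simp
    then show ?thesis using rineq by (simp add: algebra_simps)
  qed
  then have "real (weight V f) / real k \<le> real (card E) - real r + 1"
    using kpos by (simp add: divide_le_eq mult.commute)
  then have "real (weight V f) / real (n - 2) \<le> real_of_int (int (card E) - int r + 1)"
    unfolding k_def by simp
  then have "\<lceil>real (weight V f) / real (n - 2)\<rceil> \<le> int (card E) - int r + 1"
    by (simp add: ceiling_le_iff)
  then show ?thesis by simp
qed


end
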